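(* Suppose Assumption D holds. Let $P\in\Delta(\Theta,\mathcal{B})$, $\eta>0$, let $E$ be a Borel set with $p:=P(E)\in(0,1)$, and let $p^{\min}:=\inf_Q\{Q(E):Q\in\Delta(\Theta,\mathcal{B}),\,D(Q\|P)\le\eta\}$. Define $Q^*\in\Delta(\Theta,\mathcal{B})$ by $\frac{dQ^*}{dP}=\frac{p^{\min}}{p}\mathbf{1}_E+\frac{1-p^{\min}}{1-p}\mathbf{1}_{\Theta\setminus E}$. Then $Q^*$ is a minimizer of this problem, i.e. $D(Q^*\|P)\le\eta$ and $Q^*(E)=p^{\min}$.
   Context: $\Theta=[\underline\theta,\bar\theta]\subset\mathbb{R}$, Borel $\sigma$-algebra $\mathcal{B}$; "$\sigma$-algebra" means sub-$\sigma$-algebra of $\mathcal{B}$; $\Delta(\Theta,\mathcal{A})$ is the set of probability measures on $(\Theta,\mathcal{A})$; $P_{\mathcal{E}}$ is restriction. A divergence $D$ assigns to each pair $Q,P$ of probability measures on a common $\sigma$-algebra a value $D(Q\|P)\in[0,\infty]$. Assumption D: for every $\sigma$-algebra $\mathcal{A}$, $P,Q\in\Delta(\Theta,\mathcal{A})$: (D1) $D(Q\|P)=0$ if $Q=P$; (D2) if $Q\ll P$ with bounded $dQ/dP$, $\epsilon\mapsto D(\epsilon Q+(1-\epsilon)P\|P)$ is continuous on $[0,1]$; (D3) $D(Q\|P)<\infty\Rightarrow Q\ll P$; (D4) $D(Q_{\mathcal{E}}\|P_{\mathcal{E}})\le D(Q\|P)$ for sub-$\sigma$-algebras $\mathcal{E}\subset\mathcal{A}$;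 (D5) equality in (D4) when $dQ_{\mathcal{E}}/dP_{\mathcal{E}}=dQ/dP$ $P$-a.e. *)

theory Defs
  imports "HOL-Probability.Probability"
begin

definition Theta :: "real \<Rightarrow> real \<Rightarrow> real set" where
  "Theta lo hi = {lo..hi}"

definition Borel_Theta :: "real \<Rightarrow> real \<Rightarrow> real set set" where
  "Borel_Theta lo hi = sets (restrict_space borel (Theta lo hi))"

text \<open>A "sigma-algebra" in the paper: a sub-sigma-algebra of the Borel sets of Theta.\<close>
definition is_subsigma :: "real \<Rightarrow> real \<Rightarrow> real set set \<Rightarrow> bool" where
  "is_subsigma lo hi A \<longleftrightarrow> sigma_algebra (Theta lo hi) A \<and> A \<subseteq> Borel_Theta lo hi"

definition Delta :: "real \<Rightarrow> real \<Rightarrow> real set set \<Rightarrow> real measure set" where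
  "Delta lo hi A = {M. prob_space M \<and> space M = Theta lo hi \<and> sets M = A}"

definition restr :: "real measure \<Rightarrow> real set set \<Rightarrow> real measure" where
  "restr M E = measure_of (space M) E (emeasure M)"

definition mix :: "real \<Rightarrow> real measure \<Rightarrow> real measure \<Rightarrow> real measure" where
  "mix eps Q P = measure_of (space P) (sets P)
     (\<lambda>S. ennreal eps * emeasure Q S + ennreal (1 - eps) * emeasure P S)"

text \<open>Assumption D for a divergence D (values in [0, infinity]).  The argument order is
  D Q P = D(Q || P).\<close>
definition assumption_D ::
  "real \<Rightarrow> real \<Rightarrow> (real measure \<Rightarrow> real measure \<Rightarrow> ennreal) \<Rightarrow> bool" where
  "assumption_D lo hi D \<longleftrightarrow>
    (\<forall>A P Q. is_subsigma lo hi A \<longrightarrow> P \<in> Delta lo hi A \<longrightarrow> Q \<in> Delta lo hi A \<longrightarrow>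
       \<comment> \<open>(D1)\<close>
       (Q = P \<longrightarrow> D Q P = 0) \<and>
       \<comment> \<open>(D2)\<close>
       ((\<exists>f C. f \<in> borel_measurable P \<and> (\<forall>x\<in>space P. f x \<le> ennreal C) \<and> Q = density P f)
          \<longrightarrow> continuous_on {0..1} (\<lambda>eps. D (mix eps Q P) P)) \<and>
       \<comment> \<open>(D3)\<close>
       (D Q P < \<infinity> \<longrightarrow> absolutely_continuous P Q) \<and>
       \<comment> \<open>(D4) and (D5)\<close>
       (\<forall>E. is_subsigma lo hi E \<longrightarrow> E \<subseteq> A \<longrightarrow>
          D (restr Q E) (restr P E) \<le> D Q P \<and>
          ((absolutely_continuous P Q \<and>
            (AE x in P. RN_deriv (restr P E) (restr Q E) x = RN_deriv P Q x))
             \<longrightarrow> D (restr Q E) (restr P E) = D Q P)))"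

end

theory Submission
  imports Defs
begin

lemma dens_emeasure:
  assumes [measurable]: "E \<in> sets M" "F \<in> sets M" "S \<in> sets M" and "a \<ge> 0" "b \<ge> 0"
  shows "emeasure (density M (\<lambda>x. ennreal (a * indicator E x + b * indicator F x))) S
     = ennreal a * emeasure M (E \<inter> S) + ennreal b * emeasure M (F \<inter> S)"
proof -
  have "emeasure (density M (\<lambda>x. ennreal (a * indicator E x + b * indicator F x))) S
     = (\<integral>\<^sup>+x. ennreal (a * indicator E x + b * indicator F x) * indicator S x \<partial>M)"
    by (rule emeasure_density) auto
  also have "\<dots> = (\<integral>\<^sup>+x. ennreal a * indicator (E \<inter> S) x + ennreal b * indicator (F \<inter> S) x \<partial>M)"
    using assms(4,5) by (intro nn_integral_cong) (auto simp: indicator_def)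
  also have "\<dots> = ennreal a * emeasure M (E \<inter> S) + ennreal b * emeasure M (F \<inter> S)"
    by (subst nn_integral_add) (auto simp: nn_integral_cmult_indicator)
  finally show ?thesis .
qed

theorem lemma4:
  fixes lo hi :: real
    and D :: "real measure \<Rightarrow> real measure \<Rightarrow> ennreal"
    and P :: "real measure"
    and \<eta> :: real
    and E :: "real set"
    and p pmin :: real
    and Qstar :: "real measure"
  assumes hD: "assumption_D lo hi D"
    and hP: "P \<in> Delta lo hi (Borel_Theta lo hi)"
    and h\<eta>: "\<eta> > 0"
    and hE: "E \<in> Borel_Theta lo hi"
    and hp: "0 < measure P E" "measure P E < 1"
  assumes p_def: "p = measure P E"
    and pmin_def: "pmin = Inf {measure Q E | Q. Q \<in> Delta lo hi (Borel_Theta lo hi) \<and> D Q P \<le> ennreal \<eta>}"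
    and Qstar_def: "Qstar = density P (\<lambda>x. ennreal (pmin / p * indicator E x
                                     + (1 - pmin) / (1 - p) * indicator (Theta lo hi - E) x))"
  shows "Qstar \<in> Delta lo hi (Borel_Theta lo hi) \<and> D Qstar P \<le> ennreal \<eta> \<and> measure Qstar E = pmin"
proof -
  define \<Omega> where "\<Omega> = Theta lo hi"
  define B where "B = Borel_Theta lo hi"
  define \<E> where "\<E> = {{}, E, \<Omega> - E, \<Omega>}"
  define S where "S = {measure Q E | Q. Q \<in> Delta lo hi B \<and> D Q P \<le> ennreal \<eta>}"
  have PD: "prob_space P" "space P = \<Omega>" "sets P = B"
    using hP by (auto simp: Delta_def \<Omega>_def B_def)
  interpret P: prob_space P by fact
  have EP[measurable]: "E \<in> sets P" using hE PD by (simp add: B_def)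
  have EcP[measurable]: "\<Omega> - E \<in> sets P" using PD(2) EP by (metis sets.compl_sets)
  have OP: "\<Omega> \<in> sets P" using PD(2) by (metis sets.top)
  have EO: "E \<subseteq> \<Omega>" using EP PD(2) sets.sets_into_space by blast
  have pP: "0 < p" "p < 1" using hp p_def by auto
  have PE: "emeasure P E = ennreal p" using p_def P.emeasure_eq_measure by simp
  have PEc: "emeasure P (\<Omega> - E) = ennreal (1 - p)"
    using P.emeasure_eq_measure P.prob_compl[OF EP] PD(2) p_def by simp
  have subB: "is_subsigma lo hi B"
    unfolding is_subsigma_def using sets.sigma_algebra_axioms[of P] PD by (simp add: \<Omega>_def[symmetric] B_def[symmetric])
  have salgE: "sigma_algebra \<Omega> \<E>" unfolding \<E>_def by (rule sigma_algebra_single_set[OF EO])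
  have EB: "\<E> \<subseteq> B" using EP EcP OP PD(3) by (auto simp: \<E>_def)
  have subE: "is_subsigma lo hi \<E>"
    unfolding is_subsigma_def using salgE EB by (simp add: \<Omega>_def[symmetric] B_def[symmetric])
  have hD': "\<forall>A P Q. is_subsigma lo hi A \<longrightarrow> P \<in> Delta lo hi A \<longrightarrow> Q \<in> Delta lo hi A \<longrightarrow>
       (Q = P \<longrightarrow> D Q P = 0) \<and>
       ((\<exists>f C. f \<in> borel_measurable P \<and> (\<forall>x\<in>space P. f x \<le> ennreal C) \<and> Q = density P f)
          \<longrightarrow> continuous_on {0..1} (\<lambda>eps. D (mix eps Q P) P)) \<and>
       (D Q P < \<infinity> \<longrightarrow> absolutely_continuous P Q) \<and>
       (\<forall>E. is_subsigma lo hi E \<longrightarrow> E \<subseteq> A \<longrightarrow>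
          D (restr Q E) (restr P E) \<le> D Q P \<and>
          ((absolutely_continuous P Q \<and>
            (AE x in P. RN_deriv (restr P E) (restr Q E) x = RN_deriv P Q x))
             \<longrightarrow> D (restr Q E) (restr P E) = D Q P))"
    using hD unfolding assumption_D_def by blast
  have PB: "P \<in> Delta lo hi B" using hP B_def by simp
  have D1: "D P P = 0" using hD' subB PB by blast
  have D2: "continuous_on {0..1} (\<lambda>eps. D (mix eps Q P) P)"
    if "Q \<in> Delta lo hi B" "f \<in> borel_measurable P" "\<And>x. x \<in> space P \<Longrightarrow> f x \<le> ennreal C"
       "Q = density P f" for Q f C
    using hD' subB PB that by blast
  have D4: "D (restr Q \<E>) (restr P \<E>) \<le> D Q P" if "Q \<in> Delta lo hi B" for Q
    using hD' subB PB that subE EB by blast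
  have D5: "D (restr Q \<E>) (restr P \<E>) = D Q P" if "Q \<in> Delta lo hi B" "absolutely_continuous P Q"
    "AE x in P. RN_deriv (restr P \<E>) (restr Q \<E>) x = RN_deriv P Q x" for Q
    using hD' subB PB that subE EB by blast

  define g where "g t x = t / p * indicator E x + (1 - t) / (1 - p) * indicator (\<Omega> - E) x" for t x
  define Qd where "Qd t = density P (\<lambda>x. ennreal (g t x))" for t
  have Qstar_eq: "Qstar = Qd pmin" unfolding Qstar_def Qd_def g_def \<Omega>_def ..
  have g_meas[measurable]: "(\<lambda>x. ennreal (g t x)) \<in> borel_measurable P" for t
    unfolding g_def by measurable
  have Qd_emeas: "emeasure (Qd t) A = ennreal (t/p) * emeasure P (E \<inter> A) + ennreal ((1-t)/(1-p)) * emeasure P ((\<Omega> - E) \<inter> A)"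
    if "0 \<le> t" "t \<le> 1" "A \<in> sets P" for t A
    unfolding Qd_def g_def using that pP by (intro dens_emeasure) auto
  have QdE: "emeasure (Qd t) E = ennreal t" if "0 \<le> t" "t \<le> 1" for t
  proof -
    have "(\<Omega> - E) \<inter> E = {}" by auto
    moreover have "ennreal (t/p) * ennreal p = ennreal t"
      using that pP by (simp add: ennreal_mult[symmetric])
    ultimately show ?thesis using Qd_emeas[OF that EP] PE by simp
  qed
  have QdEc: "emeasure (Qd t) (\<Omega> - E) = ennreal (1 - t)" if "0 \<le> t" "t \<le> 1" for t
  proof -
    have "E \<inter> (\<Omega> - E) = {}" by auto
    moreover have "ennreal ((1-t)/(1-p)) * ennreal (1-p) = ennreal (1-t)"
      using that pP by (simp add: ennreal_mult[symmetric])
    ultimately show ?thesis using Qd_emeas[OF that EcP] PEc by simp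
  qed
  have QdO: "emeasure (Qd t) \<Omega> = 1" if "0 \<le> t" "t \<le> 1" for t
  proof -
    have "emeasure (Qd t) \<Omega> = emeasure (Qd t) E + emeasure (Qd t) (\<Omega> - E)"
      using EO EP EcP by (subst plus_emeasure) (auto simp: Qd_def Un_absorb1)
    also have "\<dots> = 1" using QdE[OF that] QdEc[OF that] that by (simp add: ennreal_plus[symmetric])
    finally show ?thesis .
  qed
  have Qd_sets: "sets (Qd t) = B" "space (Qd t) = \<Omega>" for t using PD by (auto simp: Qd_def)
  have Qd_Delta: "Qd t \<in> Delta lo hi B" if "0 \<le> t" "t \<le> 1" for t
    unfolding Delta_def using Qd_sets QdO[OF that] by (auto intro!: prob_spaceI simp: \<Omega>_def)

  have QD: "prob_space Q" "space Q = \<Omega>" "sets Q = B" if "Q \<in> Delta lo hi B" for Q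
    using that by (auto simp: Delta_def \<Omega>_def)
  have pS: "p \<in> S" unfolding S_def using PB D1 p_def by auto
  have S0: "0 \<le> q" if "q \<in> S" for q using that by (auto simp: S_def)
  have bddS: "bdd_below S" unfolding bdd_below_def using S0 by blast
  have pmin_S: "pmin = Inf S" unfolding pmin_def S_def B_def ..
  have pmin0: "0 \<le> pmin" unfolding pmin_S using pS S0 by (intro cInf_greatest) auto
  have pminp: "pmin \<le> p" unfolding pmin_S using pS bddS by (intro cInf_lower) auto

  define F where "F = sigma \<Omega> \<E>"
  have EPow: "\<E> \<subseteq> Pow \<Omega>" using salgE by (simp add: sigma_algebra_iff2)
  have sigE: "sigma_sets \<Omega> \<E> = \<E>" using salgE by (rule sigma_algebra.sigma_sets_eq)
  have F_sets: "sets F = \<E>" "space F = \<Omega>" unfolding F_def using EPow sigE by auto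
  have subF: "subalgebra Q F" if "space Q = \<Omega>" "sets Q = B" for Q
    unfolding subalgebra_def using that F_sets EB by auto
  have restr_eq: "restr Q \<E> = restr_to_subalg Q F" if "space Q = \<Omega>" for Q
    unfolding restr_def restr_to_subalg_def using that F_sets by simp
  have EF[measurable]: "E \<in> sets F" "\<Omega> - E \<in> sets F" using F_sets by (auto simp: \<E>_def)

  have feas: "D (Qd (measure Q E)) P \<le> ennreal \<eta>" if Q: "Q \<in> Delta lo hi B" "D Q P \<le> ennreal \<eta>" for Q
  proof -
    note QQ = QD[OF Q(1)]
    interpret Q: prob_space Q by fact
    define t where "t = measure Q E"
    have t01: "0 \<le> t" "t \<le> 1" unfolding t_def by auto
    have EQ: "E \<in> sets Q" using QQ EP PD by simp
    have QE: "emeasure Q E = ennreal t" unfolding t_def using Q.emeasure_eq_measure by simp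
    have QEc: "emeasure Q (\<Omega> - E) = ennreal (1 - t)"
      unfolding t_def using Q.emeasure_eq_measure Q.prob_compl[OF EQ] QQ by simp
    have QO: "emeasure Q \<Omega> = 1" using QQ Q.emeasure_space_1 by simp
    have r1: "restr (Qd t) \<E> = restr Q \<E>"
      unfolding restr_def Qd_sets(2) QQ(2)
    proof (rule measure_of_eq[OF EPow])
      fix a assume "a \<in> sigma_sets \<Omega> \<E>"
      then have "a \<in> \<E>" using sigE by simp
      then show "emeasure (Qd t) a = emeasure Q a"
        using QdE[OF t01] QdEc[OF t01] QdO[OF t01] QE QEc QO unfolding \<E>_def by auto
    qed
    have ac: "absolutely_continuous P (Qd t)" unfolding Qd_def by (rule absolutely_continuousI_density) simp
    have RN1: "AE x in P. ennreal (g t x) = RN_deriv P (Qd t) x"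
      by (rule P.RN_deriv_unique) (auto simp: Qd_def)
    define PF where "PF = restr_to_subalg P F"
    have subPF: "subalgebra P F" using subF PD by simp
    have PFprob: "prob_space PF" unfolding PF_def using subPF PD(1) by (rule prob_space_restr_to_subalg)
    interpret PF: prob_space PF by fact
    have gF[measurable]: "(\<lambda>x. ennreal (g t x)) \<in> borel_measurable F"
      unfolding g_def by measurable
    have subQF: "subalgebra (Qd t) F" using subF Qd_sets by simp
    have dens: "density PF (\<lambda>x. ennreal (g t x)) = restr_to_subalg (Qd t) F"
    proof (rule measure_eqI)
      show "sets (density PF (\<lambda>x. ennreal (g t x))) = sets (restr_to_subalg (Qd t) F)"
        using sets_restr_to_subalg[OF subPF] sets_restr_to_subalg[OF subQF] by (simp add: PF_def)
      fix A assume "A \<in> sets (density PF (\<lambda>x. ennreal (g t x)))"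
      then have AF[measurable]: "A \<in> sets F" using sets_restr_to_subalg[OF subPF] by (simp add: PF_def)
      have AP: "A \<in> sets P" using subPF AF by (auto simp: subalgebra_def)
      have "emeasure (density PF (\<lambda>x. ennreal (g t x))) A = (\<integral>\<^sup>+x. ennreal (g t x) * indicator A x \<partial>PF)"
        by (rule emeasure_density) (auto simp: PF_def measurable_in_subalg[OF subPF] sets_restr_to_subalg[OF subPF])
      also have "\<dots> = (\<integral>\<^sup>+x. ennreal (g t x) * indicator A x \<partial>P)"
        unfolding PF_def by (rule nn_integral_subalgebra2[OF subPF]) measurable
      also have "\<dots> = emeasure (Qd t) A"
        unfolding Qd_def by (rule emeasure_density[symmetric]) (auto simp: AP)
      also have "\<dots> = emeasure (restr_to_subalg (Qd t) F) A"
        by (rule emeasure_restr_to_subalg[OF subQF AF, symmetric])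
      finally show "emeasure (density PF (\<lambda>x. ennreal (g t x))) A = emeasure (restr_to_subalg (Qd t) F) A" .
    qed
    have RN2: "AE x in PF. ennreal (g t x) = RN_deriv PF (restr_to_subalg (Qd t) F) x"
      by (rule PF.RN_deriv_unique[OF _ dens]) (simp add: PF_def measurable_in_subalg[OF subPF])
    have RN2': "AE x in P. ennreal (g t x) = RN_deriv PF (restr_to_subalg (Qd t) F) x"
      using AE_restr_to_subalg[OF subPF] RN2 unfolding PF_def by blast
    have AE: "AE x in P. RN_deriv (restr P \<E>) (restr (Qd t) \<E>) x = RN_deriv P (Qd t) x"
      using RN1 RN2' unfolding restr_eq[OF PD(2)] restr_eq[OF Qd_sets(2)] PF_def by auto
    have "D (Qd t) P = D (restr (Qd t) \<E>) (restr P \<E>)"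
      using D5[OF Qd_Delta[OF t01] ac AE] by simp
    also have "\<dots> = D (restr Q \<E>) (restr P \<E>)" using r1 by simp
    also have "\<dots> \<le> D Q P" by (rule D4[OF Q(1)])
    also have "\<dots> \<le> ennreal \<eta>" by fact
    finally show ?thesis unfolding t_def .
  qed

  have mix_eq: "mix e (Qd t) P = Qd (e * t + (1 - e) * p)"
    if e: "0 \<le> e" "e \<le> 1" and t: "0 \<le> t" "t \<le> 1" for e t
  proof -
    define s where "s = e * t + (1 - e) * p"
    have "e * t \<le> e" "(1 - e) * p \<le> 1 - e" using mult_left_le[of t e] mult_left_le[of p "1-e"] e t pP by auto
    then have s01: "0 \<le> s" "s \<le> 1" unfolding s_def using e t pP by auto
    have feq: "(\<lambda>A. ennreal e * emeasure (Qd t) A + ennreal (1 - e) * emeasure P A) = emeasure (Qd s)"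
    proof
      fix A show "ennreal e * emeasure (Qd t) A + ennreal (1 - e) * emeasure P A = emeasure (Qd s) A"
      proof (cases "A \<in> sets P")
        case False
        then show ?thesis using PD Qd_sets by (simp add: emeasure_notin_sets)
      next
        case True
        define x where "x = measure P (E \<inter> A)"
        define y where "y = measure P ((\<Omega> - E) \<inter> A)"
        have xy: "0 \<le> x" "0 \<le> y" unfolding x_def y_def by auto
        have A1: "emeasure P A = emeasure P (E \<inter> A) + emeasure P ((\<Omega> - E) \<inter> A)"
        proof -
          have "A \<subseteq> \<Omega>" using True PD(2) sets.sets_into_space by blast
          then have "A = (E \<inter> A) \<union> ((\<Omega> - E) \<inter> A)" by auto
          then have eqA: "emeasure P A = emeasure P ((E \<inter> A) \<union> ((\<Omega> - E) \<inter> A))" by (rule arg_cong)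
          moreover have "emeasure P (E \<inter> A) + emeasure P ((\<Omega> - E) \<inter> A) = emeasure P ((E \<inter> A) \<union> ((\<Omega> - E) \<inter> A))"
            by (rule plus_emeasure) (use True in auto)
          ultimately show ?thesis by simp
        qed
        define a where "a = t / p"
        define b where "b = (1 - t) / (1 - p)"
        define a' where "a' = s / p"
        define b' where "b' = (1 - s) / (1 - p)"
        have ab: "0 \<le> a" "0 \<le> b" "0 \<le> a'" "0 \<le> b'" unfolding a_def b_def a'_def b'_def
          using t pP s01 by auto
        have a'eq: "a' = e * a + (1 - e)" unfolding a'_def a_def s_def using pP by (simp add: field_simps)
        have b'eq: "b' = e * b + (1 - e)" unfolding b'_def b_def s_def using pP by (simp add: field_simps)
        have real_eq: "e * (a * x + b * y) + (1 - e) * (x + y) = a' * x + b' * y"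
          unfolding a'eq b'eq by (simp add: algebra_simps)
        have nn: "0 \<le> a * x" "0 \<le> b * y" "0 \<le> a * x + b * y" "0 \<le> e * (a * x + b * y)"
          "0 \<le> (1 - e) * (x + y)" "0 \<le> x + y" "0 \<le> 1 - e" "0 \<le> a' * x" "0 \<le> b' * y"
          using ab xy e by auto
        have L: "ennreal e * emeasure (Qd t) A + ennreal (1 - e) * emeasure P A
            = ennreal (e * (a * x + b * y) + (1 - e) * (x + y))"
          unfolding Qd_emeas[OF t True] A1 unfolding P.emeasure_eq_measure x_def[symmetric] y_def[symmetric] a_def[symmetric] b_def[symmetric]
          using ab xy e nn by (simp add: ennreal_mult)
        have R: "emeasure (Qd s) A = ennreal (a' * x + b' * y)"
          unfolding Qd_emeas[OF s01 True] P.emeasure_eq_measure x_def[symmetric] y_def[symmetric] a'_def[symmetric] b'_def[symmetric]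
          using ab xy nn by (simp add: ennreal_mult)
        show ?thesis using L R real_eq by simp
      qed
    qed
    have "mix e (Qd t) P = measure_of (space (Qd s)) (sets (Qd s)) (emeasure (Qd s))"
      unfolding mix_def feq using PD Qd_sets by simp
    also have "\<dots> = Qd s" by (rule measure_of_of_measure)
    finally show ?thesis unfolding s_def .
  qed

  have pmin1: "pmin \<le> 1" using pminp pP by simp
  have QsD: "Qd pmin \<in> Delta lo hi B" by (rule Qd_Delta[OF pmin0 pmin1])
  have QsE: "measure (Qd pmin) E = pmin"
    unfolding measure_def QdE[OF pmin0 pmin1] using pmin0 by simp
  have Dle: "D (Qd pmin) P \<le> ennreal \<eta>"
  proof (cases "pmin = p")
    case True
    then show ?thesis using feas[OF PB] D1 p_def by simp
  next
    case False
    then have lt: "pmin < p" using pminp by simp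
    show ?thesis
    proof (rule ccontr)
      assume "\<not> D (Qd pmin) P \<le> ennreal \<eta>"
      then have gt: "ennreal \<eta> < D (Qd pmin) P" by (simp add: not_le)
      define f where "f e = D (mix e (Qd pmin) P) P" for e
      define C where "C = pmin / p + (1 - pmin) / (1 - p)"
      have bnd: "ennreal (g pmin x) \<le> ennreal C" for x
        unfolding g_def C_def using pmin0 pmin1 pP
        by (intro ennreal_leI add_mono mult_left_le) (auto simp: indicator_def)
      have cont: "continuous_on {0..1} f"
        unfolding f_def by (rule D2[OF QsD g_meas bnd]) (simp add: Qd_def)
      have f1: "f 1 = D (Qd pmin) P" unfolding f_def using mix_eq[of 1 pmin] pmin0 pmin1 by simp
      have "(f \<longlongrightarrow> f 1) (at 1 within {0..1})"
        using cont by (simp add: continuous_on_def)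
      then have "eventually (\<lambda>e. ennreal \<eta> < f e) (at 1 within {0..1})"
        using gt f1 by (simp add: order_tendstoD(1))
      then obtain d where d: "d > 0" "\<And>e. e \<in> {0..1} \<Longrightarrow> e \<noteq> 1 \<Longrightarrow> dist e 1 < d \<Longrightarrow> ennreal \<eta> < f e"
        unfolding eventually_at by blast
      define d' where "d' = min d 1 / 2"
      have d': "0 < d'" "d' < d" "d' < 1" using d by (auto simp: d'_def)
      have "Inf S < pmin + d' * (p - pmin)" using lt d' pmin_S by simp
      then obtain q where q: "q \<in> S" "q < pmin + d' * (p - pmin)"
        using cInf_lessD[of S] pS by blast
      have qge: "pmin \<le> q" unfolding pmin_S using q(1) bddS by (rule cInf_lower)
      obtain Q where Q: "q = measure Q E" "Q \<in> Delta lo hi B" "D Q P \<le> ennreal \<eta>"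
        using q(1) unfolding S_def by blast
      have Dq: "D (Qd q) P \<le> ennreal \<eta>" using feas[OF Q(2,3)] Q(1) by simp
      define e where "e = (p - q) / (p - pmin)"
      have "d' * (p - pmin) < p - pmin" using d' lt by simp
      then have qp: "q < p" using q by simp
      have e01: "0 \<le> e" "e \<le> 1" unfolding e_def using qp qge lt by auto
      have "e * (p - pmin) = p - q" unfolding e_def using lt by simp
      then have h: "e * p - e * pmin = p - q" by (simp add: right_diff_distrib)
      have eq: "e * pmin + (1 - e) * p = q" using h by (simp add: left_diff_distrib)
      have fe: "f e = D (Qd q) P" unfolding f_def using mix_eq[OF e01 pmin0 pmin1] eq by simp
      show False
      proof (cases "e = 1")
        case True
        then have "q = pmin" using eq by simp
        then show False using Dq gt by simp
      next
        case False
        have "1 - e = (q - pmin) / (p - pmin)" unfolding e_def using lt by (simp add: field_simps)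
        also have "\<dots> < d'" using q(2) lt by (simp add: field_simps)
        finally have "dist e 1 < d" using d' e01 by (simp add: dist_real_def)
        then have "ennreal \<eta> < f e" using d(2)[OF _ False] e01 by simp
        then show False using fe Dq by simp
      qed
    qed
  qed
  show ?thesis using QsD QsE Dle Qstar_eq B_def by simp
qed
end
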